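(* Let $X,Y$ be real Banach spaces and let $H$ be a closed subspace of $L(X,Y)$ with $X^*\otimes Y\subseteq H$ such that $H$ has octahedral norm. Assume that the norm of $Y$ is non-rough. Then $X^*$ has octahedral norm.
   Context: The norm of a Banach space $Z$ is octahedral if for every finite-dimensional subspace $E$ and $\varepsilon>0$ there is $y\in S_Z$ with $\|x+\lambda y\|\ge(1-\varepsilon)(\|x\|+|\lambda|)$ for all $x\in E$, scalars $\lambda$. For $u\in S_Z$, $\eta(Z,u)=\limsup_{\|h\|\to0}\frac{\|u+h\|+\|u-h\|-2}{\|h\|}$. $Z$ is $\varepsilon$-rough if $\eta(Z,u)\ge\varepsilon$ for every $u\in S_Z$; the norm is rough if $\varepsilon$-rough for some $\varepsilon>0$, non-rough otherwise. $X^*\otimes Y$ is the space of finite-rank operators spanned by $x\mapsto x^*(x)y$. *)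

theory Defs
  imports "HOL-Analysis.Analysis"
begin

definition fin_dim_subspace :: "'a::real_vector set \<Rightarrow> bool" where
  "fin_dim_subspace E \<longleftrightarrow> subspace E \<and> (\<exists>B. finite B \<and> span B = E)"

text \<open>Octahedral norm of the normed space Z (given as a linear subspace of an
  ambient normed space, with the induced norm).\<close>
definition octahedral_on :: "'a::real_normed_vector set \<Rightarrow> bool" where
  "octahedral_on Z \<longleftrightarrow>
     (\<forall>E \<epsilon>. fin_dim_subspace E \<and> E \<subseteq> Z \<and> \<epsilon> > 0 \<longrightarrow>
        (\<exists>y\<in>Z. norm y = 1 \<and>
           (\<forall>x\<in>E. \<forall>t::real. norm (x + t *\<^sub>R y) \<ge> (1 - \<epsilon>) * (norm x + \<bar>t\<bar>))))"

abbreviation octahedral :: "'a::real_normed_vector itself \<Rightarrow> bool" where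
  "octahedral _ \<equiv> octahedral_on (UNIV :: 'a set)"

definition eta :: "'a::real_normed_vector \<Rightarrow> ereal" where
  "eta u = Limsup (at 0) (\<lambda>h. ereal ((norm (u + h) + norm (u - h) - 2) / norm h))"

definition eps_rough :: "'a::real_normed_vector itself \<Rightarrow> real \<Rightarrow> bool" where
  "eps_rough _ \<epsilon> \<longleftrightarrow> (\<forall>u::'a. norm u = 1 \<longrightarrow> eta u \<ge> ereal \<epsilon>)"

definition rough :: "'a::real_normed_vector itself \<Rightarrow> bool" where
  "rough T \<longleftrightarrow> (\<exists>\<epsilon>>0. eps_rough T \<epsilon>)"

definition rank_one :: "('a::real_normed_vector \<Rightarrow>\<^sub>L real) \<Rightarrow> 'b::real_normed_vector \<Rightarrow> 'a \<Rightarrow>\<^sub>L 'b" where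
  "rank_one f y = blinfun_scaleR_left y o\<^sub>L f"

text \<open>X^* \<otimes> Y as a subspace of L(X,Y).\<close>
definition tensor_dual :: "('a::real_normed_vector \<Rightarrow>\<^sub>L 'b::real_normed_vector) set" where
  "tensor_dual = span {rank_one f y | f y. True}"

end

theory Submission
  imports Defs
begin

definition hbg :: "'a::real_normed_vector \<Rightarrow> ('a \<times> real) set \<Rightarrow> bool" where
"hbg u G \<longleftrightarrow> (u, norm u) \<in> G \<and> (\<forall>x a y b. (x,a)\<in>G \<longrightarrow> (y,b)\<in>G \<longrightarrow> (x+y,a+b)\<in>G)
   \<and> (\<forall>x a c. (x,a)\<in>G \<longrightarrow> (c *\<^sub>R x, c*a) \<in> G) \<and> (\<forall>x a. (x,a)\<in>G \<longrightarrow> a \<le> norm x)"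

lemma hbg_extend:
  fixes u :: "'a::real_normed_vector"
  assumes M: "hbg u M" and y: "\<forall>a. (y,a) \<notin> M"
  shows "\<exists>M'. hbg u M' \<and> M \<subseteq> M' \<and> M' \<noteq> M"
proof -
  have add: "\<And>x a z b. (x,a)\<in>M \<Longrightarrow> (z,b)\<in>M \<Longrightarrow> (x+z,a+b)\<in>M"
   and scl: "\<And>x a c. (x,a)\<in>M \<Longrightarrow> (c *\<^sub>R x, c*a) \<in> M"
   and dom: "\<And>x a. (x,a)\<in>M \<Longrightarrow> a \<le> norm x"
   and uM: "(u, norm u) \<in> M" using M unfolding hbg_def by blast+
  have zero: "(0,0) \<in> M" using scl[OF uM, of 0] by simp
  define S where "S = {a - norm (x - y) | x a. (x,a)\<in>M}"
  have key: "a - norm (x - y) \<le> norm (z + y) - b" if "(x,a)\<in>M" "(z,b)\<in>M" for x a z b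
  proof -
    have "a + b \<le> norm (x + z)" using dom[OF add[OF that]] .
    also have "x + z = (x - y) + (z + y)" by simp
    also have "norm \<dots> \<le> norm (x - y) + norm (z + y)" by (rule norm_triangle_ineq)
    finally show ?thesis by simp
  qed
  have Sne: "S \<noteq> {}" using zero unfolding S_def by blast
  have Sbdd: "bdd_above S" unfolding S_def bdd_above_def
    using key[OF _ zero] by auto
  define c where "c = Sup S"
  have c1: "a - norm (x - y) \<le> c" if "(x,a)\<in>M" for x a
    unfolding c_def by (rule cSup_upper[OF _ Sbdd]) (use that S_def in blast)
  have c2: "c \<le> norm (z + y) - b" if "(z,b)\<in>M" for z b
    unfolding c_def by (rule cSup_least[OF Sne]) (use key that S_def in blast)
  define M' where "M' = {(x + s *\<^sub>R y, a + s*c) | x a s. (x,a)\<in>M}"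
  have "hbg u M'"
    unfolding hbg_def
  proof (intro conjI allI impI)
    show "(u, norm u) \<in> M'" unfolding M'_def using uM by force
  next
    fix x a z b assume "(x,a)\<in>M'" "(z,b)\<in>M'"
    then obtain x1 a1 s1 x2 a2 s2 where "(x1,a1)\<in>M" "(x2,a2)\<in>M"
      "x = x1 + s1 *\<^sub>R y" "a = a1 + s1*c" "z = x2 + s2 *\<^sub>R y" "b = a2 + s2*c"
      unfolding M'_def by blast
    then show "(x+z,a+b)\<in>M'" unfolding M'_def
      by (intro CollectI exI[of _ "x1+x2"] exI[of _ "a1+a2"] exI[of _ "s1+s2"])
        (auto intro: add simp: algebra_simps)
  next
    fix x a k assume "(x,a)\<in>M'"
    then obtain x1 a1 s1 where "(x1,a1)\<in>M" "x = x1 + s1 *\<^sub>R y" "a = a1 + s1*c"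
      unfolding M'_def by blast
    then have "(k *\<^sub>R x1, k*a1) \<in> M" "k *\<^sub>R x = k *\<^sub>R x1 + (k * s1) *\<^sub>R y"
      "k*a = k*a1 + (k * s1)*c" using scl by (auto simp: algebra_simps)
    then show "(k *\<^sub>R x, k*a)\<in>M'" unfolding M'_def by blast
  next
    fix x a assume "(x,a)\<in>M'"
    then obtain x1 a1 s where m: "(x1,a1)\<in>M" and xa: "x = x1 + s *\<^sub>R y" "a = a1 + s*c"
      unfolding M'_def by blast
    show "a \<le> norm x"
    proof (cases s "0::real" rule: linorder_cases)
      case equal then show ?thesis using dom[OF m] xa by simp
    next
      case greater
      have "c \<le> norm ((1/s) *\<^sub>R x1 + y) - (1/s)*a1" using c2[OF scl[OF m]] .
      also have "(1/s) *\<^sub>R x1 + y = (1/s) *\<^sub>R (x1 + s *\<^sub>R y)" using greater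
        by (simp add: algebra_simps)
      finally have "c \<le> norm (x1 + s *\<^sub>R y)/s - a1/s" using greater by simp
      then have "s*c \<le> norm (x1 + s *\<^sub>R y) - a1" using greater
        by (simp add: field_simps)
      then show ?thesis using xa by simp
    next
      case less
      define k where "k = -s"
      have k: "k > 0" using less k_def by simp
      have "(1/k)*a1 - norm ((1/k) *\<^sub>R x1 - y) \<le> c" using c1[OF scl[OF m]] .
      moreover have "(1/k) *\<^sub>R x1 - y = (1/k) *\<^sub>R (x1 + s *\<^sub>R y)" using k k_def
        by (simp add: algebra_simps)
      ultimately have "a1/k - norm (x1 + s *\<^sub>R y)/k \<le> c" using k by simp
      then have "a1 - norm (x1 + s *\<^sub>R y) \<le> k*c" using k
        by (simp add: field_simps)
      then show ?thesis using xa k_def by simp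
    qed
  qed
  moreover have "M \<subseteq> M'" unfolding M'_def
    by (force intro: exI[of _ "0::real"])
  moreover have "(y, c) \<in> M'" unfolding M'_def using zero
    by (force intro: exI[of _ "1::real"])
  ultimately show ?thesis using y by blast
qed

lemma hahn_banach_norm:
  fixes u :: "'a::real_normed_vector"
  shows "\<exists>\<phi>. linear \<phi> \<and> \<phi> u = norm u \<and> (\<forall>y. \<phi> y \<le> norm y)"
proof -
  define A where "A = {G. hbg u G}"
  define G0 where "G0 = {(c *\<^sub>R u, c * norm u) | c. True}"
  have G0: "G0 \<in> A" unfolding A_def mem_Collect_eq hbg_def
  proof (intro conjI allI impI)
    have "(1 *\<^sub>R u, 1 * norm u) \<in> G0" unfolding G0_def by blast
    then show "(u, norm u) \<in> G0" by simp
  next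
    fix x a y b assume "(x,a) \<in> G0" "(y,b) \<in> G0"
    then obtain c d where "x = c *\<^sub>R u" "a = c * norm u" "y = d *\<^sub>R u" "b = d * norm u"
      unfolding G0_def by blast
    then have "x + y = (c+d) *\<^sub>R u" "a + b = (c+d) * norm u" by (auto simp: algebra_simps)
    then show "(x+y,a+b) \<in> G0" unfolding G0_def by blast
  next
    fix x a k assume "(x,a) \<in> G0"
    then obtain c where "x = c *\<^sub>R u" "a = c * norm u" unfolding G0_def by blast
    then have "k *\<^sub>R x = (k*c) *\<^sub>R u" "k*a = (k*c) * norm u" by auto
    then show "(k *\<^sub>R x, k*a) \<in> G0" unfolding G0_def by blast
  next
    fix x a assume "(x,a) \<in> G0"
    then obtain c where "x = c *\<^sub>R u" "a = c * norm u" unfolding G0_def by blast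
    then show "a \<le> norm x" by (simp add: mult_right_mono)
  qed
  have "\<forall>C\<in>chains A. \<exists>U\<in>A. \<forall>X\<in>C. X \<subseteq> U"
  proof
    fix C assume C: "C \<in> chains A"
    show "\<exists>U\<in>A. \<forall>X\<in>C. X \<subseteq> U"
    proof (cases "C = {}")
      case True then show ?thesis using G0 by blast
    next
      case False
      have CA: "C \<subseteq> A" and ch: "\<And>X Y. X\<in>C \<Longrightarrow> Y\<in>C \<Longrightarrow> X \<subseteq> Y \<or> Y \<subseteq> X"
        using C unfolding chains_def chain_subset_def by blast+
      have hb: "\<And>X. X \<in> C \<Longrightarrow> hbg u X" using CA A_def by blast
      have "hbg u (\<Union>C)" unfolding hbg_def
      proof (intro conjI allI impI)
        obtain X where "X \<in> C" using False by blast
        then show "(u, norm u) \<in> \<Union>C" using hb[of X] unfolding hbg_def by blast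
      next
        fix x a y b assume "(x,a)\<in>\<Union>C" "(y,b)\<in>\<Union>C"
        then obtain X Y where XY: "X\<in>C" "Y\<in>C" "(x,a)\<in>X" "(y,b)\<in>Y" by blast
        then consider "X \<subseteq> Y" | "Y \<subseteq> X" using ch by blast
        then show "(x+y,a+b)\<in>\<Union>C"
        proof cases
          case 1 then show ?thesis using XY hb[of Y] unfolding hbg_def by blast
        next
          case 2 then show ?thesis using XY hb[of X] unfolding hbg_def by blast
        qed
      next
        fix x a c assume "(x,a)\<in>\<Union>C"
        then obtain X where "X\<in>C" "(x,a)\<in>X" by blast
        then show "(c *\<^sub>R x, c*a)\<in>\<Union>C" using hb[of X] unfolding hbg_def by blast
      next
        fix x a assume "(x,a)\<in>\<Union>C"
        then obtain X where "X\<in>C" "(x,a)\<in>X" by blast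
        then show "a \<le> norm x" using hb[of X] unfolding hbg_def by blast
      qed
      then show ?thesis unfolding A_def by blast
    qed
  qed
  from Zorn_Lemma2[OF this] obtain M where MA: "M \<in> A" and max: "\<forall>X\<in>A. M \<subseteq> X \<longrightarrow> X = M"
    by blast
  have M: "hbg u M" using MA A_def by blast
  have add: "\<And>x a z b. (x,a)\<in>M \<Longrightarrow> (z,b)\<in>M \<Longrightarrow> (x+z,a+b)\<in>M"
   and scl: "\<And>x a c. (x,a)\<in>M \<Longrightarrow> (c *\<^sub>R x, c*a) \<in> M"
   and dom: "\<And>x a. (x,a)\<in>M \<Longrightarrow> a \<le> norm x"
   and uM: "(u, norm u) \<in> M" using M unfolding hbg_def by blast+
  have tot: "\<exists>a. (y,a) \<in> M" for y
  proof (rule ccontr)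
    assume "\<nexists>a. (y, a) \<in> M"
    then obtain M' where "hbg u M'" "M \<subseteq> M'" "M' \<noteq> M" using hbg_extend[OF M] by blast
    then show False using max A_def by blast
  qed
  have uniq: "a = b" if "(y,a)\<in>M" "(y,b)\<in>M" for y a b
  proof -
    have "(y + (-1) *\<^sub>R y, a + (-1)*b) \<in> M" by (rule add[OF that(1) scl[OF that(2)]])
    then have 1: "a - b \<le> 0" using dom by fastforce
    have "(y + (-1) *\<^sub>R y, b + (-1)*a) \<in> M" by (rule add[OF that(2) scl[OF that(1)]])
    then have 2: "b - a \<le> 0" using dom by fastforce
    from 1 2 show ?thesis by simp
  qed
  define \<phi> where "\<phi> y = (SOME a. (y,a) \<in> M)" for y
  have phiM: "(y, \<phi> y) \<in> M" for y unfolding \<phi>_def using tot[of y] by (rule someI_ex)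
  have "linear \<phi>"
  proof (rule linearI)
    fix x z show "\<phi> (x + z) = \<phi> x + \<phi> z" using uniq[OF phiM add[OF phiM phiM]] .
  next
    fix k x show "\<phi> (k *\<^sub>R x) = k *\<^sub>R \<phi> x" using uniq[OF phiM scl[OF phiM]] by simp
  qed
  moreover have "\<phi> u = norm u" using uniq[OF phiM uM] .
  moreover have "\<phi> y \<le> norm y" for y using dom[OF phiM] .
  ultimately show ?thesis by blast
qed


lemma hb_blinfun:
  fixes u :: "'a::real_normed_vector"
  shows "\<exists>\<phi>::'a \<Rightarrow>\<^sub>L real. norm \<phi> \<le> 1 \<and> blinfun_apply \<phi> u = norm u"
proof -
  obtain \<phi> where l: "linear \<phi>" and pu: "\<phi> u = norm u" and le: "\<And>y. \<phi> y \<le> norm y"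
    using hahn_banach_norm[of u] by blast
  have ab: "\<bar>\<phi> y\<bar> \<le> norm y" for y
  proof -
    have "\<phi> (-y) = - \<phi> y" using l by (simp add: linear_neg)
    then show ?thesis using le[of y] le[of "-y"] by simp
  qed
  have bl: "bounded_linear \<phi>"
    by (rule bounded_linear_intro[where K=1]) (use l ab in \<open>auto simp: linear_add linear_scale\<close>)
  show ?thesis
  proof (intro exI conjI)
    show "norm (Blinfun \<phi>) \<le> 1"
      by (rule norm_blinfun_bound) (use ab in \<open>auto simp: bounded_linear_Blinfun_apply[OF bl]\<close>)
    show "blinfun_apply (Blinfun \<phi>) u = norm u" by (simp add: bounded_linear_Blinfun_apply[OF bl] pu)
  qed
qed

lemma blinfun_approx:
  fixes A :: "'a::real_normed_vector \<Rightarrow>\<^sub>L 'b::real_normed_vector"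
  assumes "\<sigma> > 0"
  shows "\<exists>x. norm x \<le> 1 \<and> norm (blinfun_apply A x) > norm A - \<sigma>"
proof (rule ccontr)
  assume "\<not> ?thesis"
  then have h: "\<And>x. norm x \<le> 1 \<Longrightarrow> norm (blinfun_apply A x) \<le> norm A - \<sigma>" by force
  have h0: "0 \<le> norm A - \<sigma>" using h[of 0] by simp
  have "norm (blinfun_apply A x) \<le> (norm A - \<sigma>) * norm x" for x
  proof (cases "x = 0")
    case True then show ?thesis by simp
  next
    case False
    have "norm (blinfun_apply A ((1/norm x) *\<^sub>R x)) \<le> norm A - \<sigma>" by (rule h) (use False in simp)
    then have "norm (blinfun_apply A x) / norm x \<le> norm A - \<sigma>"
      by (simp add: blinfun.scaleR_right)
    then show ?thesis using False by (simp add: field_simps)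
  qed
  then have "norm A \<le> norm A - \<sigma>" by (rule norm_blinfun_bound[OF h0])
  then show False using assms by simp
qed

lemma rank_one_apply[simp]: "blinfun_apply (rank_one f y) x = blinfun_apply f x *\<^sub>R y"
  by (simp add: rank_one_def)

lemma norm_rank_one_ge:
  "norm (rank_one f y) \<ge> norm f * norm y"
proof -
  have "norm f * norm y - \<sigma> \<le> norm (rank_one f y)" if s: "\<sigma> > 0" for \<sigma>
  proof (cases "norm y = 0")
    case True have "0 \<le> norm (rank_one f y)" "norm f * norm y = 0" using True by simp_all then show ?thesis using that by linarith
  next
    case False
    then have ny: "norm y > 0" by simp
    obtain x where x: "norm x \<le> 1" "norm (blinfun_apply f x) > norm f - \<sigma>/norm y"
      using blinfun_approx[OF divide_pos_pos[OF s ny], of f] by auto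
    have "norm (blinfun_apply (rank_one f y) x) \<le> norm (rank_one f y) * norm x" by (rule norm_blinfun)
    also have "\<dots> \<le> norm (rank_one f y)" using x(1) by (simp add: mult_left_le)
    finally have "\<bar>blinfun_apply f x\<bar> * norm y \<le> norm (rank_one f y)" by simp
    moreover have "(norm f - \<sigma>/norm y) * norm y \<le> \<bar>blinfun_apply f x\<bar> * norm y"
      using x(2) ny by (intro mult_right_mono) auto
    ultimately show ?thesis using ny by (simp add: field_simps)
  qed
  note key = this
  show ?thesis
  proof (rule field_le_epsilon)
    fix e :: real assume "e > 0"
    then have "norm f * norm y - e \<le> norm (rank_one f y)" by (rule key)
    then show "norm f * norm y \<le> norm (rank_one f y) + e" by linarith
  qed
qed

lemma linear_rank_one: "linear (\<lambda>f. rank_one f y)"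
  unfolding rank_one_def
  by (rule bounded_linear.linear) (rule bounded_bilinear.bounded_linear_right[OF bounded_bilinear_blinfun_compose])


lemma direct_est:
  fixes u :: "'b::real_normed_vector" and \<phi> :: "'b \<Rightarrow>\<^sub>L real"
    and T :: "'a::real_normed_vector \<Rightarrow>\<^sub>L 'b" and f :: "'a \<Rightarrow>\<^sub>L real"
  assumes nu: "norm u = 1"
    and sm: "\<And>h. norm h < r \<Longrightarrow> norm (u + h) \<le> 1 + blinfun_apply \<phi> h + \<delta> * norm h"
    and nT: "norm T \<le> 1" and nf: "norm f = 1"
    and oct: "norm (rank_one f u + t *\<^sub>R T) \<ge> (1-\<eta>)*(1+t)"
    and t: "0 < t" "t \<le> 1" "4*t \<le> r" and eta: "0 < \<eta>" "\<eta> \<le> 1/8" and dl: "0 \<le> \<delta>"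
  shows "norm (f + t *\<^sub>R (\<phi> o\<^sub>L T)) \<ge> (1-\<eta>)*(1+t) - \<eta> - \<delta>*t"
proof -
  let ?N = "rank_one f u + t *\<^sub>R T"
  obtain x0 where x0: "norm x0 \<le> 1" "norm (blinfun_apply ?N x0) > norm ?N - \<eta>"
    using blinfun_approx[OF eta(1)] by blast
  define x where "x = (if blinfun_apply f x0 \<ge> 0 then x0 else -x0)"
  have xn: "norm x \<le> 1" using x0 by (simp add: x_def)
  have Nx: "norm (blinfun_apply ?N x) = norm (blinfun_apply ?N x0)"
    by (simp add: x_def blinfun.minus_right)
  define a where "a = blinfun_apply f x"
  define w where "w = blinfun_apply T x"
  have a0: "a \<ge> 0" by (simp add: a_def x_def blinfun.minus_right)
  have nw: "norm w \<le> 1"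
  proof -
    have "norm w \<le> norm T * norm x" unfolding w_def by (rule norm_blinfun)
    also have "\<dots> \<le> 1" using nT xn by (simp add: mult_le_one)
    finally show ?thesis .
  qed
  have Nxe: "blinfun_apply ?N x = a *\<^sub>R u + t *\<^sub>R w" by (simp add: a_def w_def plus_blinfun.rep_eq scaleR_blinfun.rep_eq)
  have big: "norm (a *\<^sub>R u + t *\<^sub>R w) > (1-\<eta>)*(1+t) - \<eta>"
    using x0(2) oct Nx Nxe by simp
  have "norm (a *\<^sub>R u + t *\<^sub>R w) \<le> norm (a *\<^sub>R u) + norm (t *\<^sub>R w)" by (rule norm_triangle_ineq)
  also have "\<dots> \<le> a + t" using a0 nu t nw by (simp add: mult_left_le)
  finally have "a > (1-\<eta>)*(1+t) - \<eta> - t" using big by simp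
  then have "a > 1 - \<eta>*(2+t)" by (simp add: algebra_simps)
  moreover have "\<eta>*(2+t) \<le> (1/8)*3" using eta t by (intro mult_mono) auto
  ultimately have ah: "a > 1/2" by simp
  define h where "h = (t/a) *\<^sub>R w"
  have nh: "norm h \<le> t/a" unfolding h_def using nw t ah by (simp add: divide_right_mono mult_left_le)
  also have "t/a < 2*t" using ah t by (simp add: field_simps)
  finally have "norm h < r" using t by simp
  then have s: "norm (u + h) \<le> 1 + blinfun_apply \<phi> h + \<delta> * norm h" by (rule sm)
  have "a *\<^sub>R u + t *\<^sub>R w = a *\<^sub>R (u + h)" unfolding h_def using ah by (simp add: algebra_simps)
  then have "norm (a *\<^sub>R u + t *\<^sub>R w) = a * norm (u + h)" using a0 by simp
  also have "\<dots> \<le> a * (1 + blinfun_apply \<phi> h + \<delta> * norm h)" using s a0 by (rule mult_left_mono)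
  also have "\<dots> = a + t * blinfun_apply \<phi> w + \<delta> * t * norm w"
    unfolding h_def using ah t by (simp add: blinfun.scaleR_right field_simps)
  also have "\<delta> * t * norm w \<le> \<delta> * t" using nw dl t by (simp add: mult_left_le)
  finally have up: "norm (a *\<^sub>R u + t *\<^sub>R w) \<le> a + t * blinfun_apply \<phi> w + \<delta> * t" by simp
  have "a + t * blinfun_apply \<phi> w = blinfun_apply (f + t *\<^sub>R (\<phi> o\<^sub>L T)) x"
    by (simp add: a_def w_def plus_blinfun.rep_eq scaleR_blinfun.rep_eq)
  also have "\<dots> \<le> norm (blinfun_apply (f + t *\<^sub>R (\<phi> o\<^sub>L T)) x)" by simp
  also have "\<dots> \<le> norm (f + t *\<^sub>R (\<phi> o\<^sub>L T)) * norm x" by (rule norm_blinfun)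
  also have "\<dots> \<le> norm (f + t *\<^sub>R (\<phi> o\<^sub>L T))" using xn by (simp add: mult_left_le)
  finally show ?thesis using up big by (simp add: algebra_simps)
qed


lemma core_est:
  fixes f xs :: "'a::real_normed_vector \<Rightarrow>\<^sub>L real"
  assumes dir: "\<And>t. 0 < t \<Longrightarrow> t \<le> t0 \<Longrightarrow> norm (f + t *\<^sub>R xs) \<ge> (1-\<eta>)*(1+t) - \<eta> - (e/2)*t"
    and nf: "norm f = 1" and t0: "0 < t0" "t0 \<le> 1/4" and eta: "\<eta> = e*t0/8" and e: "0 < e" "e \<le> 1/2"
  shows "\<And>t. t0 \<le> t \<Longrightarrow> norm (f + t *\<^sub>R xs) \<ge> 1 + t*(1-e)"
    and "\<And>t. 0 \<le> t \<Longrightarrow> norm (f + t *\<^sub>R xs) \<ge> (1-e)*(1+t)"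
proof -
  have g0: "norm (f + t0 *\<^sub>R xs) \<ge> 1 + t0*(1-e)"
  proof -
    have "\<eta>*(2+t0) \<le> (e*t0/8) * 3" unfolding eta using e t0 by (intro mult_left_mono) auto
    moreover have "e*t0 \<ge> 0" using e t0 by simp
    ultimately have "(1-\<eta>)*(1+t0) - \<eta> - (e/2)*t0 \<ge> 1 + t0*(1-e)" by (simp add: algebra_simps)
    then show ?thesis using dir[OF t0(1) order_refl] by simp
  qed
  show big: "norm (f + t *\<^sub>R xs) \<ge> 1 + t*(1-e)" if tt: "t0 \<le> t" for t
  proof -
    define l where "l = t0 / t"
    have tp: "t > 0" using tt t0 by simp
    have l: "0 < l" "l \<le> 1" using tt t0 tp by (auto simp: l_def)
    have "f + t0 *\<^sub>R xs = (1-l) *\<^sub>R f + l *\<^sub>R (f + t *\<^sub>R xs)"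
      using tp by (simp add: l_def algebra_simps)
    then have "norm (f + t0 *\<^sub>R xs) \<le> norm ((1-l) *\<^sub>R f) + norm (l *\<^sub>R (f + t *\<^sub>R xs))"
      by (metis norm_triangle_ineq)
    also have "\<dots> = (1-l) + l * norm (f + t *\<^sub>R xs)" using l nf by simp
    finally have "1 + t0*(1-e) \<le> (1-l) + l * norm (f + t *\<^sub>R xs)" using g0 by simp
    then have "l + t0*(1-e) \<le> l * norm (f + t *\<^sub>R xs)" by simp
    then have "t * (l + t0*(1-e)) \<le> t * (l * norm (f + t *\<^sub>R xs))"
      using tp by (intro mult_left_mono) auto
    moreover have "t * (l * norm (f + t *\<^sub>R xs)) = t0 * norm (f + t *\<^sub>R xs)"
      using tp by (simp add: l_def)
    moreover have "t * (l + t0*(1-e)) = t0 + t*t0*(1-e)"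
      using tp by (simp add: l_def algebra_simps)
    ultimately have "t0 + t*t0*(1-e) \<le> t0 * norm (f + t *\<^sub>R xs)"
      by linarith
    then have "t0 * (1 + t*(1-e)) \<le> t0 * norm (f + t *\<^sub>R xs)" by (simp add: algebra_simps)
    then show ?thesis using t0 by simp
  qed
  show "norm (f + t *\<^sub>R xs) \<ge> (1-e)*(1+t)" if tt: "0 \<le> t" for t
  proof (cases "t = 0")
    case True then show ?thesis using nf e by simp
  next
    case False
    show ?thesis
    proof (cases "t \<le> t0")
      case True
      have tp: "0 < t" using False tt by simp
      have "\<eta>*(2+t) \<le> (e*t0/8) * 3" unfolding eta using e t0 True by (intro mult_left_mono) auto
      also have "\<dots> \<le> e" using e t0 by simp
      finally have h1: "\<eta>*(2+t) \<le> e" .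
      have h2: "e*t \<ge> 0" using e tp by simp
      have "(1-\<eta>)*(1+t) - \<eta> - (e/2)*t - (1-e)*(1+t) = e + e*t/2 - \<eta>*(2+t)"
        by (simp add: algebra_simps)
      then have "(1-\<eta>)*(1+t) - \<eta> - (e/2)*t \<ge> (1-e)*(1+t)" using h1 h2 by linarith
      then show ?thesis using dir[OF tp True] by simp
    next
      case False
      then have "1 + t*(1-e) \<le> norm (f + t *\<^sub>R xs)" using big by simp
      moreover have "(1-e)*(1+t) \<le> 1 + t*(1-e)" using e by (simp add: algebra_simps)
      ultimately show ?thesis by simp
    qed
  qed
qed


theorem mainTheorem13:
  fixes H :: "('a::banach \<Rightarrow>\<^sub>L 'b::banach) set"
  assumes "subspace H" and "closed H"
    and "tensor_dual \<subseteq> H"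
    and "octahedral_on H"
    and "\<not> rough TYPE('b)"
  shows "octahedral TYPE('a \<Rightarrow>\<^sub>L real)"
proof -
  have octH: "\<And>E \<epsilon>. fin_dim_subspace E \<Longrightarrow> E \<subseteq> H \<Longrightarrow> \<epsilon> > 0 \<Longrightarrow>
      \<exists>y\<in>H. norm y = 1 \<and> (\<forall>x\<in>E. \<forall>t::real. norm (x + t *\<^sub>R y) \<ge> (1-\<epsilon>)*(norm x + \<bar>t\<bar>))"
    using assms(4) unfolding octahedral_on_def by blast
  have fz: "fin_dim_subspace {0}" unfolding fin_dim_subspace_def
    by (auto simp: subspace_single_0 intro!: exI[of _ "{}"])
  have "{0} \<subseteq> H" using assms(1) subspace_0 by blast
  then obtain T0 where T0: "T0 \<in> H" "norm T0 = 1" using octH[OF fz, of 1] by auto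
  obtain a0 where a0: "blinfun_apply T0 a0 \<noteq> 0"
  proof (rule ccontr)
    assume "\<not> thesis"
    then have "\<And>x. blinfun_apply T0 x = blinfun_apply 0 x" using that by auto
    then have "T0 = 0" by (rule blinfun_eqI)
    then show False using T0 by simp
  qed
  have a0n: "a0 \<noteq> 0" using a0 by (auto simp: blinfun.zero_right)
  obtain g0 :: "'a \<Rightarrow>\<^sub>L real" where g0: "norm g0 \<le> 1" "blinfun_apply g0 a0 = norm a0"
    using hb_blinfun by blast
  have ng0: "norm g0 = 1"
  proof -
    have "norm a0 \<le> norm g0 * norm a0" using norm_blinfun[of g0 a0] g0 by simp
    then have "1 \<le> norm g0" using a0n by simp
    then show ?thesis using g0 by simp
  qed
  show ?thesis unfolding octahedral_on_def
  proof (intro allI impI)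
    fix E :: "('a \<Rightarrow>\<^sub>L real) set" and \<epsilon> :: real
    assume A: "fin_dim_subspace E \<and> E \<subseteq> UNIV \<and> 0 < \<epsilon>"
    then obtain B where B: "finite B" "span B = E" and sE: "subspace E" and ep: "0 < \<epsilon>"
      unfolding fin_dim_subspace_def by blast
    define E' where "E' = span (insert g0 E)"
    have spB: "span (insert g0 B) = E'" unfolding E'_def span_eq
    proof
      show "insert g0 B \<subseteq> span (insert g0 E)"
        using B span_superset[of B] span_superset[of "insert g0 E"] by auto
      show "insert g0 E \<subseteq> span (insert g0 B)"
        using B span_superset[of "insert g0 B"] span_mono[of B "insert g0 B"] by auto
    qed
    have sE': "subspace E'" unfolding E'_def by (rule subspace_span)
    have EE': "E \<subseteq> E'" unfolding E'_def using span_superset by blast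
    have gE': "g0 \<in> E'" unfolding E'_def using span_superset by blast
    define e where "e = min \<epsilon> (1/2)"
    have e: "0 < e" "e \<le> 1/2" "e \<le> \<epsilon>" using ep by (auto simp: e_def)
    define \<delta> where "\<delta> = e/2"
    have dl: "\<delta> > 0" using e by (simp add: \<delta>_def)
    obtain u :: 'b where u: "norm u = 1" "eta u < ereal \<delta>"
      using assms(5) dl unfolding rough_def eps_rough_def by (auto simp: not_le)
    have "eventually (\<lambda>h. ereal ((norm (u + h) + norm (u - h) - 2) / norm h) < ereal \<delta>) (at 0)"
      using u(2) unfolding eta_def by (rule Limsup_lessD)
    then obtain r where r: "r > 0"
      "\<And>h. h \<noteq> 0 \<Longrightarrow> dist h 0 < r \<Longrightarrow> (norm (u + h) + norm (u - h) - 2) / norm h < \<delta>"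
      unfolding eventually_at by auto
    obtain \<phi> :: "'b \<Rightarrow>\<^sub>L real" where ph: "norm \<phi> \<le> 1" "blinfun_apply \<phi> u = norm u"
      using hb_blinfun by blast
    have sm: "norm (u + h) \<le> 1 + blinfun_apply \<phi> h + \<delta> * norm h" if hr: "norm h < r" for h
    proof (cases "h = 0")
      case True then show ?thesis using u by (simp add: blinfun.zero_right)
    next
      case False
      then have nh: "norm h > 0" by simp
      have "(norm (u + h) + norm (u - h) - 2) / norm h < \<delta>" using r(2)[OF False] hr by simp
      then have 1: "norm (u + h) + norm (u - h) - 2 < \<delta> * norm h" using nh by (simp add: field_simps)
      have "blinfun_apply \<phi> (u - h) \<le> norm (blinfun_apply \<phi> (u - h))" by simp
      also have "\<dots> \<le> norm \<phi> * norm (u - h)" by (rule norm_blinfun)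
      also have "\<dots> \<le> norm (u - h)" using ph by (simp add: mult_left_le_one_le)
      finally have 2: "1 - blinfun_apply \<phi> h \<le> norm (u - h)" using ph u by (simp add: blinfun.diff_right)
      from 1 2 show ?thesis by simp
    qed
    define t0 where "t0 = min r 1 / 4"
    have t0: "0 < t0" "t0 \<le> 1/4" "4*t0 \<le> r" using r by (auto simp: t0_def)
    define \<eta> where "\<eta> = e*t0/8"
    have "e*t0 \<le> 1*1" using e t0 by (intro mult_mono) auto
    then have eta: "0 < \<eta>" "\<eta> \<le> 1/8" using e t0 by (auto simp: \<eta>_def)
    define F where "F = (\<lambda>f. rank_one f u) ` E'"
    have Ffd: "fin_dim_subspace F" unfolding fin_dim_subspace_def
    proof
      show "subspace F" unfolding F_def by (rule linear_subspace_image[OF linear_rank_one sE'])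
      show "\<exists>B. finite B \<and> span B = F"
      proof (intro exI conjI)
        show "finite ((\<lambda>f. rank_one f u) ` insert g0 B)" using B by simp
        show "span ((\<lambda>f. rank_one f u) ` insert g0 B) = F"
          unfolding F_def spB[symmetric] by (rule span_linear_image[OF linear_rank_one])
      qed
    qed
    have FH: "F \<subseteq> H"
    proof
      fix A assume "A \<in> F"
      then obtain f where "A = rank_one f u" unfolding F_def by blast
      moreover have "rank_one f u \<in> tensor_dual" unfolding tensor_dual_def
        by (rule span_base) blast
      ultimately show "A \<in> H" using assms(3) by (simp add: subset_iff)
    qed
    from octH[OF Ffd FH eta(1)] obtain T where T: "T \<in> H" "norm T = 1"
      "\<forall>A\<in>F. \<forall>t::real. norm (A + t *\<^sub>R T) \<ge> (1-\<eta>)*(norm A + \<bar>t\<bar>)"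
      by (elim bexE conjE) (rule that)
    define xs where "xs = \<phi> o\<^sub>L T"
    have nxs1: "norm xs \<le> 1"
    proof -
      have "norm xs \<le> norm \<phi> * norm T" unfolding xs_def by (rule norm_blinfun_compose)
      also have "\<dots> \<le> 1" using ph T by (simp add: mult_le_one)
      finally show ?thesis .
    qed
    have core: "(\<forall>t. t0 \<le> t \<longrightarrow> norm (f + t *\<^sub>R xs) \<ge> 1 + t*(1-e)) \<and>
                (\<forall>t. 0 \<le> t \<longrightarrow> norm (f + t *\<^sub>R xs) \<ge> (1-e)*(1+t))"
      if fE: "f \<in> E'" and nf: "norm f = 1" for f
    proof -
      have dir: "norm (f + t *\<^sub>R xs) \<ge> (1-\<eta>)*(1+t) - \<eta> - (e/2)*t" if tt: "0 < t" "t \<le> t0" for t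
      proof -
        have "norm (rank_one f u) \<ge> 1" using norm_rank_one_ge[of f u] nf u by simp
        then have "(1-\<eta>)*(1+t) \<le> (1-\<eta>)*(norm (rank_one f u) + \<bar>t\<bar>)"
          using eta tt by (intro mult_left_mono) auto
        also have "\<dots> \<le> norm (rank_one f u + t *\<^sub>R T)"
        proof -
          have "rank_one f u \<in> F" using fE unfolding F_def by (rule imageI)
          then show ?thesis using T(3) by blast
        qed
        finally have oc: "norm (rank_one f u + t *\<^sub>R T) \<ge> (1-\<eta>)*(1+t)" .
        have "norm (f + t *\<^sub>R (\<phi> o\<^sub>L T)) \<ge> (1-\<eta>)*(1+t) - \<eta> - \<delta>*t"
          by (rule direct_est[OF u(1) sm]) (use T nf oc tt t0 eta dl in auto)
        then show ?thesis by (simp add: xs_def \<delta>_def)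
      qed
      show ?thesis using core_est[OF dir nf t0(1,2) \<eta>_def e(1,2)] by blast
    qed
    have nxs: "norm xs \<ge> 1 - e"
    proof -
      have "1 + t0*(1-e) \<le> norm (g0 + t0 *\<^sub>R xs)" using core[OF gE' ng0] by simp
      also have "\<dots> \<le> norm g0 + norm (t0 *\<^sub>R xs)" by (rule norm_triangle_ineq)
      also have "\<dots> = 1 + t0 * norm xs" using ng0 t0 by simp
      finally have "t0 * (1-e) \<le> t0 * norm xs" by simp
      then show ?thesis using t0 by simp
    qed
    have gen: "norm (x + s *\<^sub>R xs) \<ge> (1-e)*(norm x + \<bar>s\<bar>)" if xE: "x \<in> E'" for x s
    proof (cases "x = 0")
      case True
      have "(1-e)*\<bar>s\<bar> \<le> norm xs * \<bar>s\<bar>" using nxs by (intro mult_right_mono) auto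
      then show ?thesis using True by (simp add: mult.commute)
    next
      case False
      define n where "n = norm x"
      have n: "n > 0" using False by (simp add: n_def)
      define f where "f = (1/n) *\<^sub>R x"
      have fE: "f \<in> E'" "-f \<in> E'" using xE sE' by (auto simp: f_def subspace_scale subspace_neg)
      have nf: "norm f = 1" "norm (-f) = 1" using n by (auto simp: f_def n_def)
      show ?thesis
      proof (cases "s \<ge> 0")
        case True
        have eq: "x + s *\<^sub>R xs = n *\<^sub>R (f + (s/n) *\<^sub>R xs)" using n by (simp add: f_def algebra_simps)
        have "0 \<le> s/n" using True n by simp
        then have "(1-e)*(1 + s/n) \<le> norm (f + (s/n) *\<^sub>R xs)"
          using conjunct2[OF core[OF fE(1) nf(1)]] by blast
        then have "n * ((1-e)*(1 + s/n)) \<le> n * norm (f + (s/n) *\<^sub>R xs)" using n by simp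
        moreover have "n * ((1-e)*(1 + s/n)) = (1-e)*(norm x + \<bar>s\<bar>)" using n True
          by (simp add: n_def field_simps)
        moreover have "norm (x + s *\<^sub>R xs) = n * norm (f + (s/n) *\<^sub>R xs)" using eq n by simp
        ultimately show ?thesis by linarith
      next
        case False
        have eq: "x + s *\<^sub>R xs = - (n *\<^sub>R (-f + (-s/n) *\<^sub>R xs))" using n by (simp add: f_def algebra_simps)
        have "0 \<le> -s/n" using False n by (simp add: divide_nonpos_pos)
        then have "(1-e)*(1 + (-s)/n) \<le> norm (-f + (-s/n) *\<^sub>R xs)"
          using conjunct2[OF core[OF fE(2) nf(2)]] by blast
        then have "n * ((1-e)*(1 + (-s)/n)) \<le> n * norm (-f + (-s/n) *\<^sub>R xs)" using n by simp
        moreover have "n * ((1-e)*(1 + (-s)/n)) = (1-e)*(norm x + \<bar>s\<bar>)"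
        proof -
          have "n*(1 + (-s)/n) = norm x + \<bar>s\<bar>" using n False by (simp add: n_def field_simps)
          then show ?thesis by (metis mult.left_commute)
        qed
        moreover have "norm (x + s *\<^sub>R xs) = n * norm (-f + (-s/n) *\<^sub>R xs)"
          using n by (simp only: eq norm_minus_cancel norm_scaleR abs_of_pos)
        ultimately show ?thesis by linarith
      qed
    qed
    have nxp: "norm xs > 0" using nxs e by linarith
    define y where "y = (1 / norm xs) *\<^sub>R xs"
    show "\<exists>y\<in>UNIV. norm y = 1 \<and> (\<forall>x\<in>E. \<forall>t::real. norm (x + t *\<^sub>R y) \<ge> (1-\<epsilon>)*(norm x + \<bar>t\<bar>))"
    proof (intro bexI conjI ballI allI)
      show "norm y = 1" using nxp by (simp add: y_def)
    next
      fix x t assume xE: "x \<in> E"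
      have "x + t *\<^sub>R y = x + (t / norm xs) *\<^sub>R xs" by (simp add: y_def)
      then have 1: "norm (x + t *\<^sub>R y) \<ge> (1-e)*(norm x + \<bar>t / norm xs\<bar>)"
        using gen[of x "t / norm xs"] xE EE' by auto
      have "\<bar>t\<bar> \<le> \<bar>t / norm xs\<bar>" using nxp nxs1
        by (simp add: abs_div field_simps mult_left_le)
      then have "(1-\<epsilon>)*(norm x + \<bar>t\<bar>) \<le> (1-e)*(norm x + \<bar>t / norm xs\<bar>)"
        using e by (intro mult_mono) auto
      with 1 show "norm (x + t *\<^sub>R y) \<ge> (1-\<epsilon>)*(norm x + \<bar>t\<bar>)" by simp
    qed simp
  qed
qed

end
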